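(* For all $u^l\in\mathcal E^l_{T,\pm}$ and $u^r\in\mathcal E^r_{T,\pm}$, $$\|u^l+u^r\|^2_{\dot{\mathcal E}_{T,\pm}}=\|u^l\|^2_{\dot{\mathcal E}_{T,\pm}}+\|u^r\|^2_{\dot{\mathcal E}_{T,\pm}}.$$
   Context: Let $\Lambda>0,M>0,a\in\mathbb R$, $\Delta_r=(1-\frac13\Lambda r^2)(r^2+a^2)-2Mr$, positive on $(r_-,r_+)$ with $0<r_-<r_+$ simple roots, $\lambda=1+\frac13\Lambda a^2$; $x$ the Regge–Wheeler coordinate ($dx/dr=\lambda(r^2+a^2)/\Delta_r$), $r=r(x)$. Fix $n\in\mathbb Z$, $\mathcal Y^n=\ker(D_\phi-n)\subset L^2(\mathbb R_x\times\mathbb S^2)$. $l(x)=\frac{an}{a^2+r(x)^2}$, $l_\pm=\frac{an}{a^2+r_\pm^2}$, $w_+=\partial_x+il$, $w_-=-\partial_x+il$, $\tilde w_-=-\partial_x-il+2il_+$, $\tilde w_+=\partial_x-il+2il_-$. $h_{0,T,+}=-(\partial_x+i(l-l_+))^2$, $h_{0,T,-}=-(-\partial_x+i(l-l_-))^2$ (nonnegative selfadjoint, maximal domains). $\dot{\mathcal E}_{T,\pm}$ is the completion of $\mathrm{Dom}(h_{0,T,\pm}^{1/2})\oplus L^2$ for $\|u\|^2=\|u_1+l_\pm u_0\|^2+\langle h_{0,T,\pm}u_0,u_0\rangle$; $\dot{\mathcal E}^n_{T,\pm}$ is the closure of its $\mathcal Y^n$-valued part. With the maps $u\mapsto\frac{w}{i}u_0+u_1$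 extended continuously to $L^2$: $\mathcal E^r_{T,+}=\{u\in\dot{\mathcal E}^n_{T,+}:\frac{w_+}iu_0+u_1=0\}$, $\mathcal E^l_{T,+}=\{u\in\dot{\mathcal E}^n_{T,+}:\frac{\tilde w_-}iu_0+u_1=0\}$, $\mathcal E^r_{T,-}=\{u\in\dot{\mathcal E}^n_{T,-}:\frac{\tilde w_+}iu_0+u_1=0\}$, $\mathcal E^l_{T,-}=\{u\in\dot{\mathcal E}^n_{T,-}:\frac{w_-}iu_0+u_1=0\}$. *)

theory Defs
  imports "HOL-Analysis.Analysis"
begin

definition Delta_r :: "real \<Rightarrow> real \<Rightarrow> real \<Rightarrow> real \<Rightarrow> real" where
  "Delta_r Lam M a \<rho> = (1 - Lam * \<rho>\<^sup>2 / 3) * (\<rho>\<^sup>2 + a\<^sup>2) - 2 * M * \<rho>"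

definition lam_const :: "real \<Rightarrow> real \<Rightarrow> real" where
  "lam_const Lam a = 1 + Lam * a\<^sup>2 / 3"

text \<open>Standing assumptions; the Regge--Wheeler coordinate is encoded through its inverse
  r = r(x), a bijection of the real line onto (r_-, r_+) with dr/dx = Delta_r / (lambda (r^2+a^2)).\<close>
definition KdS_setting ::
  "real \<Rightarrow> real \<Rightarrow> real \<Rightarrow> real \<Rightarrow> real \<Rightarrow> (real \<Rightarrow> real) \<Rightarrow> bool" where
  "KdS_setting Lam M a rm rp r \<longleftrightarrow>
     Lam > 0 \<and> M > 0 \<and> 0 < rm \<and> rm < rp \<and>
     Delta_r Lam M a rm = 0 \<and> Delta_r Lam M a rp = 0 \<and>
     deriv (Delta_r Lam M a) rm \<noteq> 0 \<and> deriv (Delta_r Lam M a) rp \<noteq> 0 \<and>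
     (\<forall>\<rho>\<in>{rm<..<rp}. Delta_r Lam M a \<rho> > 0) \<and>
     bij_betw r UNIV {rm<..<rp} \<and>
     (\<forall>x. (r has_real_derivative
            Delta_r Lam M a (r x) / (lam_const Lam a * ((r x)\<^sup>2 + a\<^sup>2))) (at x))"

definition ell :: "real \<Rightarrow> int \<Rightarrow> real \<Rightarrow> real" where
  "ell a n \<rho> = a * real_of_int n / (a\<^sup>2 + \<rho>\<^sup>2)"

section \<open>L^2(R_x \<times> S^2) in coordinates (x, theta, phi)\<close>

type_synonym cfun = "real \<times> real \<times> real \<Rightarrow> complex"
type_synonym pre = "cfun \<times> cfun \<times> cfun"  \<comment> \<open>(u0, d_x u0, u1)\<close>

definition mu :: "(real \<times> real \<times> real) measure" where
  "mu = density lborel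
     (\<lambda>p. indicator ({0<..<pi} \<times> {0<..<2*pi}) (snd p) * ennreal (sin (fst (snd p))))"

definition L2 :: "cfun set" where
  "L2 = {f. f \<in> borel_measurable mu \<and> (\<integral>\<^sup>+ p. ennreal ((cmod (f p))\<^sup>2) \<partial>mu) < \<infinity>}"

definition L2norm :: "cfun \<Rightarrow> real" where
  "L2norm f = sqrt (enn2real (\<integral>\<^sup>+ p. ennreal ((cmod (f p))\<^sup>2) \<partial>mu))"

text \<open>Y^n = ker(D_phi - n), D_phi = -i d/dphi: functions e^{i n phi} v(x, theta).\<close>
definition Yn :: "int \<Rightarrow> cfun set" where
  "Yn n = {f \<in> L2. \<exists>v. AE p in mu. f p = cis (real_of_int n * snd (snd p)) * v (fst p, fst (snd p))}"

definition test_fun :: "cfun \<Rightarrow> cfun \<Rightarrow> bool" where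
  "test_fun \<psi> d\<psi> \<longleftrightarrow> continuous_on UNIV \<psi> \<and> continuous_on UNIV d\<psi> \<and>
     (\<forall>x \<theta> \<phi>. ((\<lambda>s. \<psi> (s, \<theta>, \<phi>)) has_vector_derivative d\<psi> (x, \<theta>, \<phi>)) (at x)) \<and>
     compact (closure {p. \<psi> p \<noteq> 0}) \<and>
     closure {p. \<psi> p \<noteq> 0} \<subseteq> UNIV \<times> ({0<..<pi} \<times> {0<..<2*pi})"

definition weak_dx :: "cfun \<Rightarrow> cfun \<Rightarrow> bool" where
  "weak_dx u g \<longleftrightarrow> (\<forall>\<psi> d\<psi>. test_fun \<psi> d\<psi> \<longrightarrow>
      integral\<^sup>L mu (\<lambda>p. u p * d\<psi> p) = - integral\<^sup>L mu (\<lambda>p. g p * \<psi> p))"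

section \<open>Y^n-valued elements of Dom(h^{1/2}) \<oplus> L^2 and the energy norms\<close>

definition preE :: "int \<Rightarrow> pre set" where
  "preE n = {(u0, du0, u1). u0 \<in> Yn n \<and> u1 \<in> Yn n \<and> du0 \<in> L2 \<and> weak_dx u0 du0}"

definition addP :: "pre \<Rightarrow> pre \<Rightarrow> pre" where
  "addP U V = (case U of (u0, du0, u1) \<Rightarrow> case V of (v0, dv0, v1) \<Rightarrow>
      (\<lambda>p. u0 p + v0 p, \<lambda>p. du0 p + dv0 p, \<lambda>p. u1 p + v1 p))"

definition subP :: "pre \<Rightarrow> pre \<Rightarrow> pre" where
  "subP U V = (case U of (u0, du0, u1) \<Rightarrow> case V of (v0, dv0, v1) \<Rightarrow>
      (\<lambda>p. u0 p - v0 p, \<lambda>p. du0 p - dv0 p, \<lambda>p. u1 p - v1 p))"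

text \<open>Energy norm of dot-E_{T,+}: ||u1 + l_+ u0||^2 + <h_{0,T,+} u0, u0>, where
  <h u0,u0> = ||(d_x + i(l - l_+)) u0||^2 (form of h = A^* A, A = d_x + i(l-l_+)).\<close>
definition energyTp :: "real \<Rightarrow> int \<Rightarrow> (real \<Rightarrow> real) \<Rightarrow> real \<Rightarrow> pre \<Rightarrow> real" where
  "energyTp a n r rp U = (case U of (u0, du0, u1) \<Rightarrow>
     sqrt ((L2norm (\<lambda>p. u1 p + complex_of_real (ell a n rp) * u0 p))\<^sup>2 +
           (L2norm (\<lambda>p. du0 p + \<i> * complex_of_real (ell a n (r (fst p)) - ell a n rp) * u0 p))\<^sup>2))"

definition energyTm :: "real \<Rightarrow> int \<Rightarrow> (real \<Rightarrow> real) \<Rightarrow> real \<Rightarrow> pre \<Rightarrow> real" where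
  "energyTm a n r rm U = (case U of (u0, du0, u1) \<Rightarrow>
     sqrt ((L2norm (\<lambda>p. u1 p + complex_of_real (ell a n rm) * u0 p))\<^sup>2 +
           (L2norm (\<lambda>p. - du0 p + \<i> * complex_of_real (ell a n (r (fst p)) - ell a n rm) * u0 p))\<^sup>2))"

text \<open>The maps u \<mapsto> (w/i) u0 + u1 on pre-elements, for the four vector fields.\<close>
definition map_w :: "(real \<Rightarrow> complex) \<Rightarrow> complex \<Rightarrow> pre \<Rightarrow> cfun" where
  "map_w c s U = (case U of (u0, du0, u1) \<Rightarrow>
     (\<lambda>p. (s * du0 p + c (fst p) * u0 p) / \<i> + u1 p))"
  \<comment> \<open>w = s d_x + c(x), s = \<plusminus>1\<close>

definition w_plus where "w_plus a n r = map_w (\<lambda>x. \<i> * ell a n (r x)) 1"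
definition w_minus where "w_minus a n r = map_w (\<lambda>x. \<i> * ell a n (r x)) (-1)"
definition tw_minus where
  "tw_minus a n r rp = map_w (\<lambda>x. - \<i> * ell a n (r x) + 2 * \<i> * ell a n rp) (-1)"
definition tw_plus where
  "tw_plus a n r rm = map_w (\<lambda>x. - \<i> * ell a n (r x) + 2 * \<i> * ell a n rm) 1"

definition cauchy_E :: "(pre \<Rightarrow> real) \<Rightarrow> (nat \<Rightarrow> pre) \<Rightarrow> bool" where
  "cauchy_E E U \<longleftrightarrow> (\<forall>e>0. \<exists>N. \<forall>m\<ge>N. \<forall>k\<ge>N. E (subP (U m) (U k)) < e)"

text \<open>Representatives (Cauchy sequences of Y^n-valued pre-elements) of elements of the closed
  subspace of dot-E^n_T on which the continuous extension of the map F vanishes.\<close>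
definition seq_rep :: "int \<Rightarrow> (pre \<Rightarrow> real) \<Rightarrow> (pre \<Rightarrow> cfun) \<Rightarrow> (nat \<Rightarrow> pre) set" where
  "seq_rep n E F = {U. (\<forall>k. U k \<in> preE n) \<and> cauchy_E E U \<and>
                        (\<lambda>k. L2norm (F (U k))) \<longlonglongrightarrow> 0}"

definition norm_completion :: "(pre \<Rightarrow> real) \<Rightarrow> (nat \<Rightarrow> pre) \<Rightarrow> real" where
  "norm_completion E U = lim (\<lambda>k. E (U k))"

end

theory Submission
  imports Defs
begin

lemma sq_sum_le: "((x::real)+y)\<^sup>2 \<le> 2*x\<^sup>2 + 2*y\<^sup>2"
proof -
  have "0 \<le> (x-y)\<^sup>2" by simp
  thus ?thesis by (simp add: power2_eq_square algebra_simps)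
qed
lemma prod_le_sq: "\<bar>(x::real)*y\<bar> \<le> \<bar>x\<^sup>2 + y\<^sup>2\<bar>"
proof -
  have "0 \<le> (\<bar>x\<bar>-\<bar>y\<bar>)\<^sup>2" by simp
  hence "2*\<bar>x\<bar>*\<bar>y\<bar> \<le> x\<^sup>2 + y\<^sup>2" by (simp add: power2_eq_square algebra_simps)
  moreover have "\<bar>x\<bar>*\<bar>y\<bar> \<ge> 0" by simp
  moreover have "\<bar>x*y\<bar> = \<bar>x\<bar>*\<bar>y\<bar>" by (simp add: abs_mult)
  moreover have "\<bar>x\<^sup>2 + y\<^sup>2\<bar> = x\<^sup>2 + y\<^sup>2" by simp
  ultimately show ?thesis by linarith
qed

lemma meas_cnj[measurable]: "g \<in> borel_measurable M \<Longrightarrow> (\<lambda>x. cnj (g x)) \<in> borel_measurable M"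
  by (rule borel_measurable_continuous_on[where f=cnj]) (auto intro: continuous_intros)

definition SQ :: "cfun \<Rightarrow> bool" where
  "SQ f \<longleftrightarrow> f \<in> borel_measurable mu \<and> integrable mu (\<lambda>p. (cmod (f p))\<^sup>2)"

definition I2 :: "cfun \<Rightarrow> real" where
  "I2 f = (\<integral>p. (cmod (f p))\<^sup>2 \<partial>mu)"

lemma L2norm_eq: "f \<in> borel_measurable mu \<Longrightarrow> L2norm f = sqrt (I2 f)"
  unfolding L2norm_def I2_def
  by (subst integral_eq_nn_integral) auto

lemma I2_nonneg: "I2 f \<ge> 0"
  unfolding I2_def by (rule integral_nonneg_AE) auto

lemma L2norm_sq: "f \<in> borel_measurable mu \<Longrightarrow> (L2norm f)\<^sup>2 = I2 f"
  using L2norm_eq I2_nonneg by simp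

lemma L2_SQ: "f \<in> L2 \<Longrightarrow> SQ f"
  unfolding L2_def SQ_def by (auto simp: integrable_iff_bounded)

lemma SQ_add: assumes "SQ f" "SQ g" shows "SQ (\<lambda>p. f p + g p)"
proof -
  have m: "f \<in> borel_measurable mu" "g \<in> borel_measurable mu" using assms SQ_def by auto
  have i: "integrable mu (\<lambda>p. 2 * (cmod (f p))\<^sup>2 + 2 * (cmod (g p))\<^sup>2)"
    using assms unfolding SQ_def by auto
  have b: "(cmod (f p + g p))\<^sup>2 \<le> 2 * (cmod (f p))\<^sup>2 + 2 * (cmod (g p))\<^sup>2" for p
  proof -
    have "cmod (f p + g p) \<le> cmod (f p) + cmod (g p)" by (rule norm_triangle_ineq)
    hence "(cmod (f p + g p))\<^sup>2 \<le> (cmod (f p) + cmod (g p))\<^sup>2"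
      by (simp add: power_mono)
    also have "\<dots> \<le> 2 * (cmod (f p))\<^sup>2 + 2 * (cmod (g p))\<^sup>2"
      by (rule sq_sum_le)
    finally show ?thesis .
  qed
  show ?thesis unfolding SQ_def
    apply (intro conjI)
    using m apply measurable
    apply (rule Bochner_Integration.integrable_bound[OF i])
    using m apply measurable
    using b by (auto intro!: AE_I2 simp: abs_le_iff)
qed

lemma SQ_mult: assumes "SQ f" "c \<in> borel_measurable mu" "\<And>p. cmod (c p) \<le> K"
  shows "SQ (\<lambda>p. c p * f p)"
proof -
  have m: "f \<in> borel_measurable mu" using assms SQ_def by auto
  have i: "integrable mu (\<lambda>p. K\<^sup>2 * (cmod (f p))\<^sup>2)"
    using assms unfolding SQ_def by auto
  have b: "(cmod (c p * f p))\<^sup>2 \<le> K\<^sup>2 * (cmod (f p))\<^sup>2" for p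
  proof -
    have "cmod (c p * f p) \<le> K * cmod (f p)" using assms(3)[of p]
      by (simp add: norm_mult mult_right_mono)
    hence "(cmod (c p * f p))\<^sup>2 \<le> (K * cmod (f p))\<^sup>2"
      by (simp add: power_mono)
    thus ?thesis by (simp add: power_mult_distrib)
  qed
  show ?thesis unfolding SQ_def
    apply (intro conjI)
    using m assms(2) apply measurable
    apply (rule Bochner_Integration.integrable_bound[OF i])
    using m assms(2) apply measurable
    using b by (auto intro!: AE_I2 simp: abs_le_iff)
qed

lemma SQ_cmult: "SQ f \<Longrightarrow> SQ (\<lambda>p. c * f p)"
  by (rule SQ_mult[where K="cmod c"]) auto

lemma SQ_diff: "SQ f \<Longrightarrow> SQ g \<Longrightarrow> SQ (\<lambda>p. f p - g p)"
  using SQ_add[of f "\<lambda>p. (-1) * g p"] SQ_cmult[of g "-1"] by simp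

lemma SQ_meas: "SQ f \<Longrightarrow> f \<in> borel_measurable mu" by (simp add: SQ_def)

lemma SQ_prod_int: assumes "SQ f" "SQ g"
  shows "integrable mu (\<lambda>p. cmod (f p) * cmod (g p))"
proof -
  have i: "integrable mu (\<lambda>p. (cmod (f p))\<^sup>2 + (cmod (g p))\<^sup>2)"
    using assms unfolding SQ_def by auto
  show ?thesis
    apply (rule Bochner_Integration.integrable_bound[OF i])
    using assms[THEN SQ_meas] apply measurable
  proof -
    have "norm (cmod (f p) * cmod (g p)) \<le> norm ((cmod (f p))\<^sup>2 + (cmod (g p))\<^sup>2)" for p
      using prod_le_sq by (simp only: real_norm_def)
    thus "AE p in mu. norm (cmod (f p) * cmod (g p)) \<le> norm ((cmod (f p))\<^sup>2 + (cmod (g p))\<^sup>2)" by simp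
  qed
qed

lemma CS_real: assumes h: "\<And>s. s > 0 \<Longrightarrow> 2 * s * I \<le> P + s\<^sup>2 * Q" and P0: "P \<ge> 0" and Q0: "Q \<ge> 0"
  shows "I \<le> sqrt P * sqrt Q"
proof (cases "I \<le> 0")
  case True
  have "0 \<le> sqrt P * sqrt Q" using P0 Q0 by simp
  then show ?thesis using True by linarith
next
  case False
  hence I0: "I > 0" by simp
  show ?thesis
  proof (cases "Q = 0")
    case True
    have pos: "P/I + 1 > 0" using I0 P0 by (simp add: add_nonneg_pos)
    have "2 * (P/I+1) * I \<le> P" using h[OF pos] True by simp
    moreover have "2 * (P/I+1) * I = 2*P + 2*I" using I0 by (simp add: field_simps)
    ultimately show ?thesis using I0 P0 by linarith
  next
    case Q: False
    hence Qp: "Q > 0" using Q0 by simp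
    show ?thesis
    proof (cases "P = 0")
      case True
      have sp: "I/Q > 0" using I0 Qp by simp
      have "2 * (I/Q) * I \<le> (I/Q)\<^sup>2 * Q" using h[OF sp] True by simp
      moreover have "(I/Q)\<^sup>2 * Q = I*I/Q" using Qp by (simp add: power2_eq_square)
      moreover have "2 * (I/Q) * I = 2*(I*I/Q)" by simp
      moreover have "I*I/Q > 0" using I0 Qp by simp
      ultimately show ?thesis by linarith
    next
      case P: False
      hence Pp: "P > 0" using P0 by simp
      define s where "s = sqrt P / sqrt Q"
      have sp: "s > 0" using Pp Qp by (simp add: s_def)
      have "s\<^sup>2 = P / Q" using P0 Q0 by (simp add: s_def power_divide)
      hence "s\<^sup>2 * Q = P" using Qp by simp
      hence "2 * s * I \<le> 2 * P" using h[OF sp] by simp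
      hence "s * I \<le> P" by simp
      hence "I \<le> P / s" using sp by (simp add: pos_le_divide_eq mult.commute)
      also have "P / s = sqrt P * sqrt Q"
      proof -
        have sPn: "sqrt P \<noteq> 0" using Pp by simp
        have "P / s = (P / sqrt P) * sqrt Q" unfolding s_def by (simp only: divide_divide_eq_right times_divide_eq_left)
        also have "\<dots> = sqrt P * sqrt Q" using P0 by (simp only: real_div_sqrt)
        finally show ?thesis .
      qed
      finally show ?thesis .
    qed
  qed
qed

lemma CS: assumes "SQ f" "SQ g"
  shows "(\<integral>p. cmod (f p) * cmod (g p) \<partial>mu) \<le> sqrt (I2 f) * sqrt (I2 g)"
proof (rule CS_real[OF _ I2_nonneg I2_nonneg])
  fix s :: real assume s: "s > 0"
  have pw: "2 * s * (cmod (f p) * cmod (g p)) \<le> (cmod (f p))\<^sup>2 + s\<^sup>2 * (cmod (g p))\<^sup>2" for p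
  proof -
    have "0 \<le> (cmod (f p) - s * cmod (g p))\<^sup>2" by simp
    thus ?thesis by (simp add: power2_eq_square algebra_simps)
  qed
  have "(\<integral>p. 2 * s * (cmod (f p) * cmod (g p)) \<partial>mu) \<le> (\<integral>p. (cmod (f p))\<^sup>2 + s\<^sup>2 * (cmod (g p))\<^sup>2 \<partial>mu)"
    apply (rule integral_mono)
    using SQ_prod_int[OF assms] assms pw unfolding SQ_def by auto
  thus "2 * s * (\<integral>p. cmod (f p) * cmod (g p) \<partial>mu) \<le> I2 f + s\<^sup>2 * I2 g"
    using assms unfolding I2_def SQ_def by simp
qed

lemma SQ_re_int: assumes "SQ f" "SQ g"
  shows "integrable mu (\<lambda>p. Re (f p * cnj (g p)))"
proof (rule Bochner_Integration.integrable_bound[OF SQ_prod_int[OF assms]])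
  show "(\<lambda>p. Re (f p * cnj (g p))) \<in> borel_measurable mu"
    using assms[THEN SQ_meas] by measurable
  have "norm (Re (f p * cnj (g p))) \<le> norm (cmod (f p) * cmod (g p))" for p
    using abs_Re_le_cmod[of "f p * cnj (g p)"] by (simp add: norm_mult)
  thus "AE p in mu. norm (Re (f p * cnj (g p))) \<le> norm (cmod (f p) * cmod (g p))" by simp
qed

lemma I2_add: assumes "SQ f" "SQ g"
  shows "I2 (\<lambda>p. f p + g p) = I2 f + I2 g + 2 * (\<integral>p. Re (f p * cnj (g p)) \<partial>mu)"
proof -
  have pw: "(cmod (f p + g p))\<^sup>2 = ((cmod (f p))\<^sup>2 + (cmod (g p))\<^sup>2) + 2 * Re (f p * cnj (g p))" for p
    by (simp add: cmod_power2 power2_sum algebra_simps)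
  have i1: "integrable mu (\<lambda>p. (cmod (f p))\<^sup>2)" "integrable mu (\<lambda>p. (cmod (g p))\<^sup>2)"
    using assms unfolding SQ_def by auto
  have i2: "integrable mu (\<lambda>p. 2 * Re (f p * cnj (g p)))"
    using SQ_re_int[OF assms] by (rule integrable_mult_right)
  have "I2 (\<lambda>p. f p + g p) = (\<integral>p. ((cmod (f p))\<^sup>2 + (cmod (g p))\<^sup>2) + 2 * Re (f p * cnj (g p)) \<partial>mu)"
    unfolding I2_def pw ..
  also have "\<dots> = (\<integral>p. (cmod (f p))\<^sup>2 + (cmod (g p))\<^sup>2 \<partial>mu) + (\<integral>p. 2 * Re (f p * cnj (g p)) \<partial>mu)"
    by (rule Bochner_Integration.integral_add[OF Bochner_Integration.integrable_add[OF i1] i2])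
  also have "(\<integral>p. (cmod (f p))\<^sup>2 + (cmod (g p))\<^sup>2 \<partial>mu) = I2 f + I2 g"
    unfolding I2_def by (rule Bochner_Integration.integral_add[OF i1])
  also have "(\<integral>p. 2 * Re (f p * cnj (g p)) \<partial>mu) = 2 * (\<integral>p. Re (f p * cnj (g p)) \<partial>mu)"
    by (rule integral_mult_right_zero)
  finally show ?thesis .
qed

lemma L2norm_triangle: assumes "SQ f" "SQ g"
  shows "L2norm (\<lambda>p. f p + g p) \<le> L2norm f + L2norm g"
proof -
  have m: "(\<lambda>p. f p + g p) \<in> borel_measurable mu" using SQ_add[OF assms] SQ_meas by blast
  have "(\<integral>p. Re (f p * cnj (g p)) \<partial>mu) \<le> (\<integral>p. cmod (f p) * cmod (g p) \<partial>mu)"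
    apply (rule integral_mono[OF SQ_re_int[OF assms] SQ_prod_int[OF assms]])
    by (metis complex_Re_le_cmod complex_mod_cnj norm_mult)
  also have "\<dots> \<le> sqrt (I2 f) * sqrt (I2 g)" by (rule CS[OF assms])
  finally have c: "(\<integral>p. Re (f p * cnj (g p)) \<partial>mu) \<le> sqrt (I2 f) * sqrt (I2 g)" .
  have sf: "(sqrt (I2 f))\<^sup>2 = I2 f" "(sqrt (I2 g))\<^sup>2 = I2 g" using I2_nonneg by auto
  have "I2 (\<lambda>p. f p + g p) \<le> (sqrt (I2 f) + sqrt (I2 g))\<^sup>2"
    unfolding I2_add[OF assms] power2_sum sf using c by linarith
  hence "sqrt (I2 (\<lambda>p. f p + g p)) \<le> sqrt ((sqrt (I2 f) + sqrt (I2 g))\<^sup>2)"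
    by (rule real_sqrt_le_mono)
  also have "\<dots> = sqrt (I2 f) + sqrt (I2 g)" using I2_nonneg by simp
  finally have "sqrt (I2 (\<lambda>p. f p + g p)) \<le> sqrt (I2 f) + sqrt (I2 g)" .
  thus ?thesis using L2norm_eq m SQ_meas assms by metis
qed

definition EE :: "cfun \<Rightarrow> cfun \<Rightarrow> real" where
  "EE f g = sqrt ((L2norm f)\<^sup>2 + (L2norm g)\<^sup>2)"

definition cauchy_pair :: "(nat \<Rightarrow> cfun) \<Rightarrow> (nat \<Rightarrow> cfun) \<Rightarrow> bool" where
  "cauchy_pair a b \<longleftrightarrow> (\<forall>e>0. \<exists>N. \<forall>m\<ge>N. \<forall>k\<ge>N. EE (\<lambda>p. a m p - a k p) (\<lambda>p. b m p - b k p) < e)"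

lemma L2norm_nonneg: "L2norm f \<ge> 0" unfolding L2norm_def by simp

lemma EE_nonneg: "EE f g \<ge> 0" unfolding EE_def by simp

lemma EE_sq: "(EE f g)\<^sup>2 = (L2norm f)\<^sup>2 + (L2norm g)\<^sup>2" unfolding EE_def by simp

lemma L2norm_le_EE: "L2norm g \<le> EE f g" "L2norm f \<le> EE f g"
  unfolding EE_def using L2norm_nonneg
  by (simp_all add: real_le_rsqrt)

lemma L2norm_swap: "L2norm (\<lambda>p. f p - g p) = L2norm (\<lambda>p. g p - f p)"
  unfolding L2norm_def by (simp add: norm_minus_commute)

lemma EE_swap: "EE (\<lambda>p. f p - g p) (\<lambda>p. h p - j p) = EE (\<lambda>p. g p - f p) (\<lambda>p. j p - h p)"
  unfolding EE_def using L2norm_swap by metis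

lemma L2norm_tri2: assumes "SQ f1" "SQ f2"
  shows "L2norm f1 \<le> L2norm f2 + L2norm (\<lambda>p. f1 p - f2 p)"
  using L2norm_triangle[OF assms(2) SQ_diff[OF assms]] by simp

lemma sqrt_pair_mono: "0 \<le> x \<Longrightarrow> x \<le> x' \<Longrightarrow> 0 \<le> y \<Longrightarrow> y \<le> y' \<Longrightarrow> sqrt (x\<^sup>2 + y\<^sup>2) \<le> sqrt (x'\<^sup>2 + y'\<^sup>2)"
  by (simp add: add_mono power_mono)

lemma sqrt_pair_tri: "sqrt ((x2+x3)\<^sup>2 + (y2+y3)\<^sup>2) \<le> sqrt (x2\<^sup>2 + y2\<^sup>2) + sqrt (x3\<^sup>2 + y3\<^sup>2)"
proof -
  have "cmod (Complex x2 y2 + Complex x3 y3) \<le> cmod (Complex x2 y2) + cmod (Complex x3 y3)"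
    by (rule norm_triangle_ineq)
  thus ?thesis by (simp add: cmod_def)
qed

lemma EE_tri: assumes "SQ f1" "SQ f2" "SQ g1" "SQ g2"
  shows "EE f1 g1 \<le> EE f2 g2 + EE (\<lambda>p. f1 p - f2 p) (\<lambda>p. g1 p - g2 p)"
proof -
  have "EE f1 g1 \<le> sqrt ((L2norm f2 + L2norm (\<lambda>p. f1 p - f2 p))\<^sup>2 + (L2norm g2 + L2norm (\<lambda>p. g1 p - g2 p))\<^sup>2)"
    unfolding EE_def
    by (rule sqrt_pair_mono) (auto intro: L2norm_nonneg L2norm_tri2 assms)
  also have "\<dots> \<le> EE f2 g2 + EE (\<lambda>p. f1 p - f2 p) (\<lambda>p. g1 p - g2 p)"
    unfolding EE_def by (rule sqrt_pair_tri)
  finally show ?thesis .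
qed

lemma EE_dist: assumes "SQ f1" "SQ f2" "SQ g1" "SQ g2"
  shows "\<bar>EE f1 g1 - EE f2 g2\<bar> \<le> EE (\<lambda>p. f1 p - f2 p) (\<lambda>p. g1 p - g2 p)"
  using EE_tri[OF assms] EE_tri[OF assms(2,1,4,3)] EE_swap[of f2 f1 g2 g1] by linarith

lemma EE_conv: assumes "\<And>k. SQ (a k)" "\<And>k. SQ (b k)" "cauchy_pair a b"
  shows "(\<lambda>k. EE (a k) (b k)) \<longlonglongrightarrow> lim (\<lambda>k. EE (a k) (b k))"
proof -
  have "Cauchy (\<lambda>k. EE (a k) (b k))"
  proof (rule metric_CauchyI)
    fix e :: real assume "e > 0"
    then obtain N where N: "\<forall>m\<ge>N. \<forall>k\<ge>N. EE (\<lambda>p. a m p - a k p) (\<lambda>p. b m p - b k p) < e"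
      using assms(3) unfolding cauchy_pair_def by blast
    show "\<exists>M. \<forall>m\<ge>M. \<forall>n\<ge>M. dist (EE (a m) (b m)) (EE (a n) (b n)) < e"
      apply (rule exI[of _ N])
      using N EE_dist[OF assms(1) assms(1) assms(2) assms(2)] unfolding dist_real_def
      by (meson order_le_less_trans)
  qed
  thus ?thesis using Cauchy_convergent_iff convergent_LIMSEQ_iff by blast
qed

lemma cross_id: assumes "cmod s = 1"
  shows "a * cnj c + b * cnj d = s * b * cnj (c + s * d) + (a - s * b) * cnj c"
proof -
  have "s * cnj s = 1" using assms by (metis complex_norm_square mult.commute of_real_1 power_one)
  hence "s * b * cnj (c + s * d) = s * b * cnj c + b * cnj d * (s * cnj s)"
    by (simp add: algebra_simps)
  also have "\<dots> = s * b * cnj c + b * cnj d" using \<open>s * cnj s = 1\<close> by simp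
  finally show ?thesis by (simp add: algebra_simps)
qed

lemma cross_bound: assumes "cmod s = 1"
  shows "\<bar>Re (a * cnj c) + Re (b * cnj d)\<bar> \<le> cmod b * cmod (c + s * d) + cmod (a - s * b) * cmod c"
proof -
  have e: "a * cnj c + b * cnj d = s * b * cnj (c + s * d) + (a - s * b) * cnj c"
    by (rule cross_id[OF assms])
  have "Re (a * cnj c) + Re (b * cnj d) = Re (a * cnj c + b * cnj d)" by (simp only: plus_complex.sel)
  also have "\<dots> = Re (s * b * cnj (c + s * d) + (a - s * b) * cnj c)" by (simp only: e)
  also have "\<bar>\<dots>\<bar> \<le> cmod (s * b * cnj (c + s * d) + (a - s * b) * cnj c)" by (rule abs_Re_le_cmod)
  also have "\<dots> \<le> cmod (s * b * cnj (c + s * d)) + cmod ((a - s * b) * cnj c)" by (rule norm_triangle_ineq)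
  also have "\<dots> = cmod b * cmod (c + s * d) + cmod (a - s * b) * cmod c"
    by (simp only: norm_mult complex_mod_cnj assms mult_1_left)
  finally show ?thesis .
qed

lemma core:
  fixes a b c d :: "nat \<Rightarrow> cfun" and s :: complex
  assumes cs: "cmod s = 1"
    and sa: "\<And>k. SQ (a k)" and sb: "\<And>k. SQ (b k)" and sc: "\<And>k. SQ (c k)" and sd: "\<And>k. SQ (d k)"
    and cab: "cauchy_pair a b" and ccd: "cauchy_pair c d"
    and F: "(\<lambda>k. L2norm (\<lambda>p. a k p - s * b k p)) \<longlonglongrightarrow> 0"
    and G: "(\<lambda>k. L2norm (\<lambda>p. c k p + s * d k p)) \<longlonglongrightarrow> 0"
  shows "(lim (\<lambda>k. EE (\<lambda>p. a k p + c k p) (\<lambda>p. b k p + d k p)))\<^sup>2 =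
         (lim (\<lambda>k. EE (a k) (b k)))\<^sup>2 + (lim (\<lambda>k. EE (c k) (d k)))\<^sup>2"
proof -
  define La where "La = lim (\<lambda>k. EE (a k) (b k))"
  define Lc where "Lc = lim (\<lambda>k. EE (c k) (d k))"
  have ta: "(\<lambda>k. EE (a k) (b k)) \<longlonglongrightarrow> La" unfolding La_def by (rule EE_conv[OF sa sb cab])
  have tc: "(\<lambda>k. EE (c k) (d k)) \<longlonglongrightarrow> Lc" unfolding Lc_def by (rule EE_conv[OF sc sd ccd])
  obtain Kb where Kb: "\<And>k. L2norm (b k) \<le> Kb"
  proof -
    from convergent_imp_Bseq[OF convergentI[OF ta]] obtain K where "\<forall>k. norm (EE (a k) (b k)) \<le> K" by (auto elim: BseqE)
    hence "L2norm (b k) \<le> K" for k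
      using order_trans[OF L2norm_le_EE(1)[of "b k" "a k"] abs_le_D1] by (metis real_norm_def)
    thus ?thesis by (rule that)
  qed
  obtain Kc where Kc: "\<And>k. L2norm (c k) \<le> Kc"
  proof -
    from convergent_imp_Bseq[OF convergentI[OF tc]] obtain K where "\<forall>k. norm (EE (c k) (d k)) \<le> K" by (auto elim: BseqE)
    hence "L2norm (c k) \<le> K" for k
      using order_trans[OF L2norm_le_EE(2)[of "c k" "d k"] abs_le_D1] by (metis real_norm_def)
    thus ?thesis by (rule that)
  qed
  define Ff where "Ff k = (\<lambda>p. a k p - s * b k p)" for k
  define Gf where "Gf k = (\<lambda>p. c k p + s * d k p)" for k
  have sF: "SQ (Ff k)" for k unfolding Ff_def by (rule SQ_diff[OF sa SQ_cmult[OF sb]])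
  have sG: "SQ (Gf k)" for k unfolding Gf_def by (rule SQ_add[OF sc SQ_cmult[OF sd]])
  define X where "X k = (\<integral>p. Re (a k p * cnj (c k p)) \<partial>mu) + (\<integral>p. Re (b k p * cnj (d k p)) \<partial>mu)" for k
  have eq: "(EE (\<lambda>p. a k p + c k p) (\<lambda>p. b k p + d k p))\<^sup>2 = (EE (a k) (b k))\<^sup>2 + (EE (c k) (d k))\<^sup>2 + 2 * X k" for k
  proof -
    have m: "(\<lambda>p. a k p + c k p) \<in> borel_measurable mu" "(\<lambda>p. b k p + d k p) \<in> borel_measurable mu"
      using SQ_add[OF sa sc] SQ_add[OF sb sd] SQ_meas by auto
    have e1: "(L2norm (\<lambda>p. a k p + c k p))\<^sup>2 = I2 (\<lambda>p. a k p + c k p)" by (rule L2norm_sq[OF m(1)])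
    have e2: "(L2norm (\<lambda>p. b k p + d k p))\<^sup>2 = I2 (\<lambda>p. b k p + d k p)" by (rule L2norm_sq[OF m(2)])
    have e3: "(L2norm (a k))\<^sup>2 = I2 (a k)" "(L2norm (b k))\<^sup>2 = I2 (b k)"
      "(L2norm (c k))\<^sup>2 = I2 (c k)" "(L2norm (d k))\<^sup>2 = I2 (d k)"
      using L2norm_sq SQ_meas sa sb sc sd by blast+
    show ?thesis unfolding EE_sq X_def e1 e2 e3
      using I2_add[OF sa sc, of k k] I2_add[OF sb sd, of k k] by (simp add: distrib_left)
  qed
  have bound: "\<bar>X k\<bar> \<le> Kb * L2norm (Gf k) + L2norm (Ff k) * Kc" for k
  proof -
    have i1: "integrable mu (\<lambda>p. Re (a k p * cnj (c k p)))" by (rule SQ_re_int[OF sa sc])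
    have i2: "integrable mu (\<lambda>p. Re (b k p * cnj (d k p)))" by (rule SQ_re_int[OF sb sd])
    have j1: "integrable mu (\<lambda>p. cmod (b k p) * cmod (Gf k p))" by (rule SQ_prod_int[OF sb sG])
    have j2: "integrable mu (\<lambda>p. cmod (Ff k p) * cmod (c k p))" by (rule SQ_prod_int[OF sF sc])
    have Xe: "X k = (\<integral>p. Re (a k p * cnj (c k p)) + Re (b k p * cnj (d k p)) \<partial>mu)"
      unfolding X_def by (rule Bochner_Integration.integral_add[OF i1 i2, symmetric])
    have Je: "(\<integral>p. cmod (b k p) * cmod (Gf k p) + cmod (Ff k p) * cmod (c k p) \<partial>mu) =
        (\<integral>p. cmod (b k p) * cmod (Gf k p) \<partial>mu) + (\<integral>p. cmod (Ff k p) * cmod (c k p) \<partial>mu)"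
      by (rule Bochner_Integration.integral_add[OF j1 j2])
    have pw: "\<bar>Re (a k p * cnj (c k p)) + Re (b k p * cnj (d k p))\<bar> \<le> cmod (b k p) * cmod (Gf k p) + cmod (Ff k p) * cmod (c k p)" for p
      unfolding Ff_def Gf_def by (rule cross_bound[OF cs])
    have "\<bar>X k\<bar> \<le> (\<integral>p. cmod (b k p) * cmod (Gf k p) + cmod (Ff k p) * cmod (c k p) \<partial>mu)"
    proof -
      have i12: "integrable mu (\<lambda>p. Re (a k p * cnj (c k p)) + Re (b k p * cnj (d k p)))"
        by (rule Bochner_Integration.integrable_add[OF i1 i2])
      have j12: "integrable mu (\<lambda>p. cmod (b k p) * cmod (Gf k p) + cmod (Ff k p) * cmod (c k p))"
        by (rule Bochner_Integration.integrable_add[OF j1 j2])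
      have "X k \<le> (\<integral>p. cmod (b k p) * cmod (Gf k p) + cmod (Ff k p) * cmod (c k p) \<partial>mu)"
        unfolding Xe by (rule integral_mono[OF i12 j12]) (rule order_trans[OF abs_ge_self pw])
      moreover have "- X k \<le> (\<integral>p. cmod (b k p) * cmod (Gf k p) + cmod (Ff k p) * cmod (c k p) \<partial>mu)"
      proof -
        have "- X k = (\<integral>p. - (Re (a k p * cnj (c k p)) + Re (b k p * cnj (d k p))) \<partial>mu)"
          unfolding Xe by (rule integral_minus[symmetric])
        also have "\<dots> \<le> (\<integral>p. cmod (b k p) * cmod (Gf k p) + cmod (Ff k p) * cmod (c k p) \<partial>mu)"
          by (rule integral_mono[OF Bochner_Integration.integrable_minus[OF i12] j12]) (rule order_trans[OF abs_ge_minus_self pw])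
        finally show ?thesis .
      qed
      ultimately show ?thesis by linarith
    qed
    also have "\<dots> \<le> sqrt (I2 (b k)) * sqrt (I2 (Gf k)) + sqrt (I2 (Ff k)) * sqrt (I2 (c k))"
      unfolding Je using CS[OF sb sG, of k k] CS[OF sF sc, of k k] by linarith
    also have "\<dots> = L2norm (b k) * L2norm (Gf k) + L2norm (Ff k) * L2norm (c k)"
    proof -
      have "L2norm (b k) = sqrt (I2 (b k))" "L2norm (c k) = sqrt (I2 (c k))"
        "L2norm (Ff k) = sqrt (I2 (Ff k))" "L2norm (Gf k) = sqrt (I2 (Gf k))"
        using L2norm_eq SQ_meas sb sc sF sG by blast+
      thus ?thesis by simp
    qed
    also have "\<dots> \<le> Kb * L2norm (Gf k) + L2norm (Ff k) * Kc"
    proof (rule add_mono)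
      show "L2norm (b k) * L2norm (Gf k) \<le> Kb * L2norm (Gf k)"
        by (rule mult_right_mono[OF Kb L2norm_nonneg])
      show "L2norm (Ff k) * L2norm (c k) \<le> L2norm (Ff k) * Kc"
        by (rule mult_left_mono[OF Kc L2norm_nonneg])
    qed
    finally show ?thesis .
  qed
  have "(\<lambda>k. Kb * L2norm (Gf k) + L2norm (Ff k) * Kc) \<longlonglongrightarrow> Kb * 0 + 0 * Kc"
    using F G unfolding Ff_def Gf_def by (intro tendsto_intros)
  hence g0: "(\<lambda>k. Kb * L2norm (Gf k) + L2norm (Ff k) * Kc) \<longlonglongrightarrow> 0" by simp
  have ev: "eventually (\<lambda>k. norm (X k) \<le> Kb * L2norm (Gf k) + L2norm (Ff k) * Kc) sequentially"
    using bound by simp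
  have X0: "X \<longlonglongrightarrow> 0" by (rule Lim_null_comparison[OF ev g0])
  have "(\<lambda>k. (EE (a k) (b k))\<^sup>2 + (EE (c k) (d k))\<^sup>2 + 2 * X k) \<longlonglongrightarrow> La\<^sup>2 + Lc\<^sup>2 + 2 * 0"
    by (intro tendsto_intros ta tc X0)
  hence "(\<lambda>k. (EE (\<lambda>p. a k p + c k p) (\<lambda>p. b k p + d k p))\<^sup>2) \<longlonglongrightarrow> La\<^sup>2 + Lc\<^sup>2"
    unfolding eq by simp
  hence "(\<lambda>k. sqrt ((EE (\<lambda>p. a k p + c k p) (\<lambda>p. b k p + d k p))\<^sup>2)) \<longlonglongrightarrow> sqrt (La\<^sup>2 + Lc\<^sup>2)"
    by (rule tendsto_real_sqrt)
  hence "(\<lambda>k. EE (\<lambda>p. a k p + c k p) (\<lambda>p. b k p + d k p)) \<longlonglongrightarrow> sqrt (La\<^sup>2 + Lc\<^sup>2)"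
    using EE_nonneg by simp
  hence "lim (\<lambda>k. EE (\<lambda>p. a k p + c k p) (\<lambda>p. b k p + d k p)) = sqrt (La\<^sup>2 + Lc\<^sup>2)"
    by (rule limI)
  thus ?thesis unfolding La_def[symmetric] Lc_def[symmetric] by simp
qed

lemma ell_bound: "\<bar>ell a n \<rho>\<bar> \<le> \<bar>a * real_of_int n\<bar> / a\<^sup>2"
proof (cases "a = 0")
  case True thus ?thesis by (simp add: ell_def)
next
  case False
  have d: "\<bar>a\<^sup>2 + \<rho>\<^sup>2\<bar> = a\<^sup>2 + \<rho>\<^sup>2" by simp
  have "\<bar>ell a n \<rho>\<bar> = \<bar>a * real_of_int n\<bar> / (a\<^sup>2 + \<rho>\<^sup>2)"
    unfolding ell_def abs_divide d ..
  also have "\<dots> \<le> \<bar>a * real_of_int n\<bar> / a\<^sup>2"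
  proof (rule divide_left_mono)
    have p1: "a\<^sup>2 > 0" using False by simp
    have p2: "a\<^sup>2 + \<rho>\<^sup>2 > 0" using p1 by (simp add: add_pos_nonneg)
    show "0 < (a\<^sup>2 + \<rho>\<^sup>2) * a\<^sup>2" using p1 p2 by simp
  qed simp_all
  finally show ?thesis .
qed

lemma ell_meas: assumes "r \<in> borel_measurable borel"
  shows "(\<lambda>p. \<i> * complex_of_real (ell a n (r (fst p)) - ell a n c)) \<in> borel_measurable mu"
proof -
  have h: "(\<lambda>x. \<i> * complex_of_real (ell a n (r x) - ell a n c)) \<in> borel_measurable borel"
    using assms unfolding ell_def by measurable
  have f: "fst \<in> measurable mu (borel :: real measure)"
  proof -
    have "(fst :: real \<times> real \<times> real \<Rightarrow> real) \<in> borel_measurable borel"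
      by (rule borel_measurable_continuous_onI) (intro continuous_intros)
    moreover have "sets mu = sets (borel :: (real \<times> real \<times> real) measure)" by (simp add: mu_def)
    ultimately show ?thesis using measurable_cong_sets by blast
  qed
  show ?thesis using measurable_compose[OF f h] .
qed

lemma ell_mult_bound: "cmod (\<i> * complex_of_real (ell a n x - ell a n c)) \<le> 2 * (\<bar>a * real_of_int n\<bar> / a\<^sup>2)"
proof -
  have nm: "cmod (\<i> * complex_of_real y) = \<bar>y\<bar>" for y by (simp add: norm_mult)
  have "cmod (\<i> * complex_of_real (ell a n x - ell a n c)) = \<bar>ell a n x - ell a n c\<bar>"
    by (rule nm)
  also have "\<dots> \<le> \<bar>ell a n x\<bar> + \<bar>ell a n c\<bar>" by (rule abs_triangle_ineq4)
  also have "\<dots> \<le> 2 * (\<bar>a * real_of_int n\<bar> / a\<^sup>2)" using ell_bound[of a n x] ell_bound[of a n c] by linarith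
  finally show ?thesis .
qed

definition ApF :: "real \<Rightarrow> int \<Rightarrow> real \<Rightarrow> pre \<Rightarrow> cfun" where
  "ApF a n c U = (\<lambda>p. snd (snd U) p + complex_of_real (ell a n c) * fst U p)"
definition BpF :: "real \<Rightarrow> int \<Rightarrow> (real \<Rightarrow> real) \<Rightarrow> real \<Rightarrow> pre \<Rightarrow> cfun" where
  "BpF a n r c U = (\<lambda>p. fst (snd U) p + \<i> * complex_of_real (ell a n (r (fst p)) - ell a n c) * fst U p)"
definition BmF :: "real \<Rightarrow> int \<Rightarrow> (real \<Rightarrow> real) \<Rightarrow> real \<Rightarrow> pre \<Rightarrow> cfun" where
  "BmF a n r c U = (\<lambda>p. - fst (snd U) p + \<i> * complex_of_real (ell a n (r (fst p)) - ell a n c) * fst U p)"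

lemma energyTp_EE: "energyTp a n r c U = EE (ApF a n c U) (BpF a n r c U)"
  by (cases U) (simp add: energyTp_def EE_def ApF_def BpF_def)
lemma energyTm_EE: "energyTm a n r c U = EE (ApF a n c U) (BmF a n r c U)"
  by (cases U) (simp add: energyTm_def EE_def ApF_def BmF_def)

lemma ApF_sub: "ApF a n c (subP U V) = (\<lambda>p. ApF a n c U p - ApF a n c V p)"
  by (cases U; cases V) (simp add: subP_def ApF_def algebra_simps)
lemma BpF_sub: "BpF a n r c (subP U V) = (\<lambda>p. BpF a n r c U p - BpF a n r c V p)"
  by (cases U; cases V) (simp add: subP_def BpF_def algebra_simps)
lemma BmF_sub: "BmF a n r c (subP U V) = (\<lambda>p. BmF a n r c U p - BmF a n r c V p)"
  by (cases U; cases V) (simp add: subP_def BmF_def algebra_simps)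
lemma ApF_add: "ApF a n c (addP U V) = (\<lambda>p. ApF a n c U p + ApF a n c V p)"
  by (cases U; cases V) (simp add: addP_def ApF_def algebra_simps)
lemma BpF_add: "BpF a n r c (addP U V) = (\<lambda>p. BpF a n r c U p + BpF a n r c V p)"
  by (cases U; cases V) (simp add: addP_def BpF_def algebra_simps)
lemma BmF_add: "BmF a n r c (addP U V) = (\<lambda>p. BmF a n r c U p + BmF a n r c V p)"
  by (cases U; cases V) (simp add: addP_def BmF_def algebra_simps)

lemma tw_minus_eq: "tw_minus a n r c U = (\<lambda>p. ApF a n c U p - (- \<i>) * BpF a n r c U p)"
  by (cases U) (auto simp: tw_minus_def map_w_def ApF_def BpF_def divide_complex_def algebra_simps)
lemma w_plus_eq: "w_plus a n r U = (\<lambda>p. ApF a n c U p + (- \<i>) * BpF a n r c U p)"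
  by (cases U) (auto simp: w_plus_def map_w_def ApF_def BpF_def divide_complex_def algebra_simps)
lemma w_minus_eq: "w_minus a n r U = (\<lambda>p. ApF a n c U p - \<i> * BmF a n r c U p)"
  by (cases U) (auto simp: w_minus_def map_w_def ApF_def BmF_def divide_complex_def algebra_simps)
lemma tw_plus_eq: "tw_plus a n r c U = (\<lambda>p. ApF a n c U p + \<i> * BmF a n r c U p)"
  by (cases U) (auto simp: tw_plus_def map_w_def ApF_def BmF_def divide_complex_def algebra_simps)

lemma SQ_neg: "SQ f \<Longrightarrow> SQ (\<lambda>p. - f p)"
  using SQ_cmult[of f "-1"] by simp

lemma SQ_preE: assumes "U \<in> preE n" "r \<in> borel_measurable borel"
  shows "SQ (ApF a n c U)" "SQ (BpF a n r c U)" "SQ (BmF a n r c U)"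
proof -
  obtain u0 du0 u1 where U: "U = (u0, du0, u1)" by (cases U) auto
  have h: "u0 \<in> L2" "u1 \<in> L2" "du0 \<in> L2" using assms(1) unfolding U preE_def Yn_def by auto
  have s0: "SQ u0" and s1: "SQ u1" and sd: "SQ du0" using h L2_SQ by auto
  have sm: "SQ (\<lambda>p. \<i> * complex_of_real (ell a n (r (fst p)) - ell a n c) * u0 p)"
    by (rule SQ_mult[OF s0 ell_meas[OF assms(2)] ell_mult_bound])
  show "SQ (ApF a n c U)" unfolding U ApF_def by (simp add: SQ_add[OF s1 SQ_cmult[OF s0]])
  show "SQ (BpF a n r c U)" unfolding U BpF_def fst_conv snd_conv by (rule SQ_add[OF sd sm])
  show "SQ (BmF a n r c U)" unfolding U BmF_def fst_conv snd_conv by (rule SQ_add[OF SQ_neg[OF sd] sm])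
qed

lemma caseP:
  assumes rm: "r \<in> borel_measurable borel"
    and hl: "Ul \<in> seq_rep n (energyTp a n r rp) (tw_minus a n r rp)"
    and hr: "Ur \<in> seq_rep n (energyTp a n r rp) (w_plus a n r)"
  shows "(norm_completion (energyTp a n r rp) (\<lambda>k. addP (Ul k) (Ur k)))\<^sup>2 =
            (norm_completion (energyTp a n r rp) Ul)\<^sup>2 + (norm_completion (energyTp a n r rp) Ur)\<^sup>2"
proof -
  from hl have l1: "\<And>k. Ul k \<in> preE n" and l2: "cauchy_E (energyTp a n r rp) Ul"
    and l3: "(\<lambda>k. L2norm (tw_minus a n r rp (Ul k))) \<longlonglongrightarrow> 0" unfolding seq_rep_def by auto
  from hr have r1: "\<And>k. Ur k \<in> preE n" and r2: "cauchy_E (energyTp a n r rp) Ur"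
    and r3: "(\<lambda>k. L2norm (w_plus a n r (Ur k))) \<longlonglongrightarrow> 0" unfolding seq_rep_def by auto
  have cl: "cauchy_pair (\<lambda>k. ApF a n rp (Ul k)) (\<lambda>k. BpF a n r rp (Ul k))"
    using l2 unfolding cauchy_E_def cauchy_pair_def energyTp_EE ApF_sub BpF_sub .
  have cr: "cauchy_pair (\<lambda>k. ApF a n rp (Ur k)) (\<lambda>k. BpF a n r rp (Ur k))"
    using r2 unfolding cauchy_E_def cauchy_pair_def energyTp_EE ApF_sub BpF_sub .
  have F: "(\<lambda>k. L2norm (\<lambda>p. ApF a n rp (Ul k) p - (- \<i>) * BpF a n r rp (Ul k) p)) \<longlonglongrightarrow> 0"
    using l3 unfolding tw_minus_eq .
  have G: "(\<lambda>k. L2norm (\<lambda>p. ApF a n rp (Ur k) p + (- \<i>) * BpF a n r rp (Ur k) p)) \<longlonglongrightarrow> 0"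
    using r3 unfolding w_plus_eq[where c=rp] .
  have "(lim (\<lambda>k. EE (\<lambda>p. ApF a n rp (Ul k) p + ApF a n rp (Ur k) p) (\<lambda>p. BpF a n r rp (Ul k) p + BpF a n r rp (Ur k) p)))\<^sup>2 =
         (lim (\<lambda>k. EE (ApF a n rp (Ul k)) (BpF a n r rp (Ul k))))\<^sup>2 + (lim (\<lambda>k. EE (ApF a n rp (Ur k)) (BpF a n r rp (Ur k))))\<^sup>2"
    by (rule core[where s="- \<i>", OF _ SQ_preE(1)[OF l1 rm] SQ_preE(2)[OF l1 rm] SQ_preE(1)[OF r1 rm] SQ_preE(2)[OF r1 rm] cl cr F G]) simp
  thus ?thesis unfolding norm_completion_def energyTp_EE ApF_add BpF_add .
qed

lemma caseM:
  assumes rm: "r \<in> borel_measurable borel"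
    and hl: "Ul \<in> seq_rep n (energyTm a n r rm) (w_minus a n r)"
    and hr: "Ur \<in> seq_rep n (energyTm a n r rm) (tw_plus a n r rm)"
  shows "(norm_completion (energyTm a n r rm) (\<lambda>k. addP (Ul k) (Ur k)))\<^sup>2 =
            (norm_completion (energyTm a n r rm) Ul)\<^sup>2 + (norm_completion (energyTm a n r rm) Ur)\<^sup>2"
proof -
  from hl have l1: "\<And>k. Ul k \<in> preE n" and l2: "cauchy_E (energyTm a n r rm) Ul"
    and l3: "(\<lambda>k. L2norm (w_minus a n r (Ul k))) \<longlonglongrightarrow> 0" unfolding seq_rep_def by auto
  from hr have r1: "\<And>k. Ur k \<in> preE n" and r2: "cauchy_E (energyTm a n r rm) Ur"
    and r3: "(\<lambda>k. L2norm (tw_plus a n r rm (Ur k))) \<longlonglongrightarrow> 0" unfolding seq_rep_def by auto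
  have cl: "cauchy_pair (\<lambda>k. ApF a n rm (Ul k)) (\<lambda>k. BmF a n r rm (Ul k))"
    using l2 unfolding cauchy_E_def cauchy_pair_def energyTm_EE ApF_sub BmF_sub .
  have cr: "cauchy_pair (\<lambda>k. ApF a n rm (Ur k)) (\<lambda>k. BmF a n r rm (Ur k))"
    using r2 unfolding cauchy_E_def cauchy_pair_def energyTm_EE ApF_sub BmF_sub .
  have F: "(\<lambda>k. L2norm (\<lambda>p. ApF a n rm (Ul k) p - \<i> * BmF a n r rm (Ul k) p)) \<longlonglongrightarrow> 0"
    using l3 unfolding w_minus_eq[where c=rm] .
  have G: "(\<lambda>k. L2norm (\<lambda>p. ApF a n rm (Ur k) p + \<i> * BmF a n r rm (Ur k) p)) \<longlonglongrightarrow> 0"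
    using r3 unfolding tw_plus_eq .
  have "(lim (\<lambda>k. EE (\<lambda>p. ApF a n rm (Ul k) p + ApF a n rm (Ur k) p) (\<lambda>p. BmF a n r rm (Ul k) p + BmF a n r rm (Ur k) p)))\<^sup>2 =
         (lim (\<lambda>k. EE (ApF a n rm (Ul k)) (BmF a n r rm (Ul k))))\<^sup>2 + (lim (\<lambda>k. EE (ApF a n rm (Ur k)) (BmF a n r rm (Ur k))))\<^sup>2"
    by (rule core[where s="\<i>", OF _ SQ_preE(1)[OF l1 rm] SQ_preE(3)[OF l1 rm] SQ_preE(1)[OF r1 rm] SQ_preE(3)[OF r1 rm] cl cr F G]) simp
  thus ?thesis unfolding norm_completion_def energyTm_EE ApF_add BmF_add .
qed

theorem mainTheorem13:
  fixes Lam M a rm rp :: real and n :: int and r :: "real \<Rightarrow> real"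
  assumes "KdS_setting Lam M a rm rp r"
  shows "(\<forall>Ul \<in> seq_rep n (energyTp a n r rp) (tw_minus a n r rp).
          \<forall>Ur \<in> seq_rep n (energyTp a n r rp) (w_plus a n r).
            (norm_completion (energyTp a n r rp) (\<lambda>k. addP (Ul k) (Ur k)))\<^sup>2 =
            (norm_completion (energyTp a n r rp) Ul)\<^sup>2 + (norm_completion (energyTp a n r rp) Ur)\<^sup>2)
       \<and> (\<forall>Ul \<in> seq_rep n (energyTm a n r rm) (w_minus a n r).
          \<forall>Ur \<in> seq_rep n (energyTm a n r rm) (tw_plus a n r rm).
            (norm_completion (energyTm a n r rm) (\<lambda>k. addP (Ul k) (Ur k)))\<^sup>2 =
            (norm_completion (energyTm a n r rm) Ul)\<^sup>2 + (norm_completion (energyTm a n r rm) Ur)\<^sup>2)"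
proof -
  have "\<forall>x. (r has_real_derivative
            Delta_r Lam M a (r x) / (lam_const Lam a * ((r x)\<^sup>2 + a\<^sup>2))) (at x)"
    using assms unfolding KdS_setting_def by blast
  hence "\<forall>x. isCont r x" using DERIV_isCont by blast
  hence "continuous_on UNIV r" by (simp add: continuous_at_imp_continuous_on)
  hence rmeas: "r \<in> borel_measurable borel" by (rule borel_measurable_continuous_onI)
  show ?thesis using caseP[OF rmeas] caseM[OF rmeas] by blast
qed

end
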